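(* Let $\mathbf S=\{S^m\}$, $\mathbf Z=\{Z_m\}$ be a general source with general two-sided information and $d_m$ a general sequence of distortion functions. Then $\underline{R_{\mathbf S|\mathbf Z}}(D_E)\le\underline H(\mathbf S|\mathbf Z)$ for every $D_E\ge D'_{E,\min}$, where $D'_{E,\min}=\inf_{\mathbf g}\overline D(\mathbf S,\mathbf g(\mathbf S))$. Moreover, if $\check{\mathcal S}^m=\mathcal S^m$, $d_m(s^m,\check s^m)=1\{s^m\ne\check s^m\}$ and $D_E=0$, then $\underline{R_{\mathbf S|\mathbf Z}}(0)=\underline H(\mathbf S|\mathbf Z)$.
   Context: A general source with general two-sided information: for each $m\ge1$, $(S^m,Z_m)$ is a pair of random variables with an arbitrary joint distribution $P_{S^mZ_m}$ on a finite set $\mathcal S^m\times\mathcal Z_m$; $\check{\mathcal S}^m$ are finite reconstruction sets and $d_m:\mathcal S^m\times\check{\mathcal S}^m\to[0,\infty)$ is an arbitrary sequence of distortion functions. All logarithms are base 2. For real random variables $\{B_m\}$: $\operatorname{p\text{-}liminf}_mB_m=\sup\{r:\lim_m\mathbb P(B_m<r)=0\}$, $\operatorname{p\text{-}limsup}_mB_m=\inf\{r:\lim_m\mathbb P(B_m>r)=0\}$. Definitions: $\underline H(\mathbf S|\mathbf Z)=\operatorname{p\text{-}liminf}_m\frac1m\log\frac{1}{P_{S^m|Z_m}(S^m|Z_m)}$; $\overline I(\mathbf S;\tilde{\mathbf S}|\mathbf Z)=\operatorname{p\text{-}limsup}_m\frac1m\log\frac{P_{\tilde S^m|S^mZ_m}(\tilde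 S^m|S^m,Z_m)}{P_{\tilde S^m|Z_m}(\tilde S^m|Z_m)}$; $\underline D(\mathbf S,\tilde{\mathbf S})=\inf\{d:\liminf_m\mathbb P[d_m(S^m,\tilde S^m)\ge d]<1\}$ and $\overline D(\mathbf S,\tilde{\mathbf S})=\operatorname{p\text{-}limsup}_m d_m(S^m,\tilde S^m)$. $\mathbf g$ ranges over sequences of functions $g^m:\mathcal S^m\to\check{\mathcal S}^m$, and $\mathbf g(\mathbf S)=\{g^m(S^m)\}$. With $D_{E,\min}=\inf_{\mathbf g}\underline D(\mathbf S,\mathbf g(\mathbf S))$, the lossy-equivocation is $\underline{R_{\mathbf S|\mathbf Z}}(D_E)=\inf_{P_{\check{\mathbf S}|\mathbf S\mathbf Z}:\underline D(\mathbf S,\check{\mathbf S})\le D_E}\overline I(\mathbf S;\check{\mathbf S}|\mathbf Z)$ for $D_E\ge D_{E,\min}$ (infimum over sequences of conditional distributions $P_{\check S^m|S^mZ_m}$ on $\check{\mathcal S}^m$) and $\underline{R_{\mathbf S|\mathbf Z}}(D_E)=+\infty$ for $D_E<D_{E,\min}$. *)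

theory Defs
  imports "HOL-Probability.Probability"
begin

text \<open>A general source with two-sided information: for each index m, a joint pmf
  on pairs (s, z).  Alphabets are finite carrier sets per index.\<close>

definition joint_ch :: "('s \<times> 'z) pmf \<Rightarrow> ('s \<Rightarrow> 'z \<Rightarrow> 'c pmf) \<Rightarrow> ('s \<times> 'z \<times> 'c) pmf" where
  "joint_ch p W = bind_pmf p (\<lambda>(s, z). map_pmf (\<lambda>c. (s, z, c)) (W s z))"

definition pliminf :: "(nat \<Rightarrow> 'a pmf) \<Rightarrow> (nat \<Rightarrow> 'a \<Rightarrow> real) \<Rightarrow> ereal" where
  "pliminf \<mu> B = Sup {ereal r | r.
     (\<lambda>m. measure_pmf.prob (\<mu> m) {x. B m x < r}) \<longlonglongrightarrow> 0}"

definition plimsup :: "(nat \<Rightarrow> 'a pmf) \<Rightarrow> (nat \<Rightarrow> 'a \<Rightarrow> real) \<Rightarrow> ereal" where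
  "plimsup \<mu> B = Inf {ereal r | r.
     (\<lambda>m. measure_pmf.prob (\<mu> m) {x. B m x > r}) \<longlonglongrightarrow> 0}"

definition marg_Z :: "('s \<times> 'z) pmf \<Rightarrow> 'z \<Rightarrow> real" where
  "marg_Z p z = measure_pmf.prob p {x. snd x = z}"

definition cond_out :: "('s \<times> 'z) pmf \<Rightarrow> ('s \<Rightarrow> 'z \<Rightarrow> 'c pmf) \<Rightarrow> 'z \<Rightarrow> 'c \<Rightarrow> real" where
  "cond_out p W z c =
     measure_pmf.prob (joint_ch p W) {t. fst (snd t) = z \<and> snd (snd t) = c} / marg_Z p z"

definition cond_ent_inf :: "(nat \<Rightarrow> ('s \<times> 'z) pmf) \<Rightarrow> ereal" where
  "cond_ent_inf P = pliminf P
     (\<lambda>m x. log 2 (1 / (pmf (P m) x / marg_Z (P m) (snd x))) / real m)"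

definition info_sup :: "(nat \<Rightarrow> ('s \<times> 'z) pmf) \<Rightarrow> (nat \<Rightarrow> 's \<Rightarrow> 'z \<Rightarrow> 'c pmf) \<Rightarrow> ereal" where
  "info_sup P W = plimsup (\<lambda>m. joint_ch (P m) (W m))
     (\<lambda>m t. log 2 (pmf (W m (fst t) (fst (snd t))) (snd (snd t))
                    / cond_out (P m) (W m) (fst (snd t)) (snd (snd t))) / real m)"

definition dist_inf :: "(nat \<Rightarrow> ('s \<times> 'c) pmf) \<Rightarrow> (nat \<Rightarrow> 's \<Rightarrow> 'c \<Rightarrow> real) \<Rightarrow> ereal" where
  "dist_inf \<mu> d = Inf {ereal \<delta> | \<delta>.
     liminf (\<lambda>m. ereal (measure_pmf.prob (\<mu> m) {x. d m (fst x) (snd x) \<ge> \<delta>})) < 1}"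

definition dist_sup :: "(nat \<Rightarrow> ('s \<times> 'c) pmf) \<Rightarrow> (nat \<Rightarrow> 's \<Rightarrow> 'c \<Rightarrow> real) \<Rightarrow> ereal" where
  "dist_sup \<mu> d = plimsup \<mu> (\<lambda>m x. d m (fst x) (snd x))"

definition det_maps :: "(nat \<Rightarrow> 's set) \<Rightarrow> (nat \<Rightarrow> 'c set) \<Rightarrow> (nat \<Rightarrow> 's \<Rightarrow> 'c) set" where
  "det_maps SS CS = {g. \<forall>m. \<forall>s\<in>SS m. g m s \<in> CS m}"

definition det_law :: "(nat \<Rightarrow> ('s \<times> 'z) pmf) \<Rightarrow> (nat \<Rightarrow> 's \<Rightarrow> 'c) \<Rightarrow> nat \<Rightarrow> ('s \<times> 'c) pmf" where
  "det_law P g m = map_pmf (\<lambda>x. (fst x, g m (fst x))) (P m)"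

definition DE_min :: "(nat \<Rightarrow> 's set) \<Rightarrow> (nat \<Rightarrow> 'c set) \<Rightarrow> (nat \<Rightarrow> ('s \<times> 'z) pmf)
    \<Rightarrow> (nat \<Rightarrow> 's \<Rightarrow> 'c \<Rightarrow> real) \<Rightarrow> ereal" where
  "DE_min SS CS P d = (INF g \<in> det_maps SS CS. dist_inf (det_law P g) d)"

definition DE_min' :: "(nat \<Rightarrow> 's set) \<Rightarrow> (nat \<Rightarrow> 'c set) \<Rightarrow> (nat \<Rightarrow> ('s \<times> 'z) pmf)
    \<Rightarrow> (nat \<Rightarrow> 's \<Rightarrow> 'c \<Rightarrow> real) \<Rightarrow> ereal" where
  "DE_min' SS CS P d = (INF g \<in> det_maps SS CS. dist_sup (det_law P g) d)"

definition channels :: "(nat \<Rightarrow> 'c set) \<Rightarrow> (nat \<Rightarrow> 's \<Rightarrow> 'z \<Rightarrow> 'c pmf) set" where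
  "channels CS = {W. \<forall>m s z. set_pmf (W m s z) \<subseteq> CS m}"

definition ch_law :: "(nat \<Rightarrow> ('s \<times> 'z) pmf) \<Rightarrow> (nat \<Rightarrow> 's \<Rightarrow> 'z \<Rightarrow> 'c pmf) \<Rightarrow> nat \<Rightarrow> ('s \<times> 'c) pmf" where
  "ch_law P W m = map_pmf (\<lambda>t. (fst t, snd (snd t))) (joint_ch (P m) (W m))"

definition lossy_equiv :: "(nat \<Rightarrow> 's set) \<Rightarrow> (nat \<Rightarrow> 'c set) \<Rightarrow> (nat \<Rightarrow> ('s \<times> 'z) pmf)
    \<Rightarrow> (nat \<Rightarrow> 's \<Rightarrow> 'c \<Rightarrow> real) \<Rightarrow> real \<Rightarrow> ereal" where
  "lossy_equiv SS CS P d DE =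
     (if ereal DE < DE_min SS CS P d then \<infinity>
      else (INF W \<in> {W \<in> channels CS. dist_inf (ch_law P W) d \<le> ereal DE}. info_sup P W))"

end

theory Submission
  imports Defs "HOL-Real_Asymp.Real_Asymp"
begin


lemma pmf_joint_ch: "pmf (joint_ch p W) (s,z,c) = pmf p (s,z) * pmf (W s z) c"
proof -
  have "pmf (joint_ch p W) (s,z,c) = (\<integral>x. pmf ((\<lambda>(s, z). map_pmf (\<lambda>c. (s, z, c)) (W s z)) x) (s,z,c) \<partial>measure_pmf p)"
    unfolding joint_ch_def pmf_bind ..
  also have "\<dots> = (\<Sum>x\<in>{(s,z)}. pmf ((\<lambda>(s, z). map_pmf (\<lambda>c. (s, z, c)) (W s z)) x) (s,z,c) * pmf p x)"
    apply (rule integral_measure_pmf_real)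
     apply simp
    apply (auto simp: pmf_eq_0_set_pmf)
    done
  also have "\<dots> = pmf (W s z) c * pmf p (s,z)"
    using pmf_map_inj'[of "\<lambda>c. (s, z, c)" "W s z" c] by (simp add: inj_def)
  finally show ?thesis by simp
qed

lemma set_joint_ch: "set_pmf (joint_ch p W) = {(s,z,c). (s,z) \<in> set_pmf p \<and> c \<in> set_pmf (W s z)}"
  unfolding joint_ch_def by (auto simp: set_bind_pmf)

lemma marg_joint_ch: "map_pmf (\<lambda>t. (fst t, fst (snd t))) (joint_ch p W) = p"
  unfolding joint_ch_def map_bind_pmf
  by (simp add: split_beta map_pmf_comp bind_return_pmf' flip: return_pmf_def)



lemma marg_ge_pmf: "pmf p x \<le> marg_Z p (snd x)"
  unfolding marg_Z_def measure_pmf_single[symmetric]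
  by (rule measure_pmf.finite_measure_mono) auto

lemma marg_pos: "x \<in> set_pmf p \<Longrightarrow> marg_Z p (snd x) > 0"
  using marg_ge_pmf[of p x] pmf_positive[of x p] by linarith

lemma marg_pmf: "marg_Z p z = pmf (map_pmf snd p) z"
  unfolding marg_Z_def pmf_map by (simp add: vimage_def)

lemma cond_out_mult:
  assumes "marg_Z p z > 0"
  shows "cond_out p W z c * marg_Z p z = measure (joint_ch p W) {t. fst (snd t) = z \<and> snd (snd t) = c}"
  using assms unfolding cond_out_def by simp

lemma cond_out_ge:
  assumes "marg_Z p z > 0"
  shows "cond_out p W z c * marg_Z p z \<ge> pmf p (s,z) * pmf (W s z) c"
proof -
  have "measure (joint_ch p W) {(s,z,c)} \<le> measure (joint_ch p W) {t. fst (snd t) = z \<and> snd (snd t) = c}"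
    by (rule measure_pmf.finite_measure_mono) auto
  then show ?thesis unfolding cond_out_mult[OF assms] measure_pmf_single pmf_joint_ch .
qed

lemma cond_out_nonneg: "cond_out p W z c \<ge> 0"
  unfolding cond_out_def marg_Z_def by simp



lemma pointwise_conv:
  fixes pi w q M n a b :: real
  assumes pi: "pi > 0" and M: "M > 0" and n: "n > 0" and q0: "q \<ge> 0" and w0: "w \<ge> 0"
    and qM: "q * M \<ge> pi * w"
    and h1: "log 2 (w / q) / n \<le> a" and h2: "b \<le> log 2 (1 / (pi / M)) / n"
  shows "pi * w \<le> 2 powr (n*(a-b)) * (q * M)"
proof -
  have "b * n \<le> log 2 (M / pi)" using h2 n by (simp add: field_simps)
  hence "2 powr (b*n) \<le> M / pi" using pi M by (simp add: le_log_iff)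
  hence piM: "pi \<le> M * 2 powr (- (b*n))" using pi by (simp add: field_simps powr_minus)
  have wq: "w \<le> 2 powr (a*n) * q"
  proof (cases "w = 0")
    case True then show ?thesis using q0 by simp
  next
    case False
    hence "pi * w > 0" using pi w0 by simp
    hence "q > 0" using qM M q0 by (metis mult_le_0_iff not_le order.strict_trans1 order_le_less)
    have "log 2 (w/q) \<le> a * n" using h1 n by (simp add: field_simps)
    hence "w / q \<le> 2 powr (a*n)" using \<open>q>0\<close> False w0 by (simp add: log_le_iff)
    thus ?thesis using \<open>q>0\<close> by (simp add: field_simps)
  qed
  have "pi * w \<le> (M * 2 powr (- (b*n))) * (2 powr (a*n) * q)"
    by (rule mult_mono[OF piM wq]) (use M q0 w0 in auto)
  also have "\<dots> = 2 powr (n*(a-b)) * (q * M)"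
    by (simp add: powr_add[symmetric] algebra_simps)
  finally show ?thesis .
qed

lemma conv_bound:
  fixes p :: "('s \<times> 'z) pmf" and W :: "'s \<Rightarrow> 'z \<Rightarrow> 's pmf"
  assumes fin: "finite (set_pmf p)" and n: "n > 0"
  shows "measure (joint_ch p W) {t. fst t = snd (snd t) \<and>
      log 2 (pmf (W (fst t) (fst (snd t))) (snd (snd t)) / cond_out p W (fst (snd t)) (snd (snd t))) / n \<le> a
      \<and> b \<le> log 2 (1 / (pmf p (fst t, fst (snd t)) / marg_Z p (fst (snd t)))) / n} \<le> 2 powr (n*(a-b))"
  (is "measure _ ?E \<le> _")
proof -
  define J where "J = joint_ch p W"
  define h where "h = (\<lambda>x::'s\<times>'z. (fst x, snd x, fst x))"
  define F where "F = {x \<in> set_pmf p. h x \<in> ?E}"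
  define \<mu> where "\<mu> = map_pmf (\<lambda>t. (snd (snd t), fst (snd t))) J"
  have finF: "finite F" using fin unfolding F_def by auto
  have injh: "inj h" unfolding h_def inj_def by auto
  have sub: "?E \<inter> set_pmf J \<subseteq> h ` F"
  proof
    fix t assume t: "t \<in> ?E \<inter> set_pmf J"
    obtain s z c where tt: "t = (s,z,c)" by (cases t) auto
    have "c = s" using t tt by auto
    moreover have "(s,z) \<in> set_pmf p" using t tt by (auto simp: set_joint_ch J_def)
    ultimately show "t \<in> h ` F" using t tt unfolding F_def h_def
      by (auto intro!: image_eqI[where x="(s,z)"])
  qed
  have "measure J ?E = measure J (?E \<inter> set_pmf J)" by (simp add: measure_Int_set_pmf)
  also have "\<dots> \<le> measure J (h ` F)" by (rule measure_pmf.finite_measure_mono[OF sub]) simp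
  also have "\<dots> = (\<Sum>x\<in>F. pmf J (h x))"
    using finF injh by (simp add: measure_measure_pmf_finite sum.reindex inj_on_subset[OF injh])
  also have "\<dots> \<le> (\<Sum>x\<in>F. 2 powr (n*(a-b)) * pmf \<mu> x)"
  proof (rule sum_mono)
    fix x assume x: "x \<in> F"
    obtain s z where xx: "x = (s,z)" by (cases x) auto
    have sp: "(s,z) \<in> set_pmf p" using x xx F_def by auto
    have M: "marg_Z p z > 0" using marg_pos[OF sp] by simp
    have pmu: "pmf \<mu> x = cond_out p W z s * marg_Z p z"
      unfolding cond_out_mult[OF M] \<mu>_def pmf_map xx J_def
      by (rule arg_cong[where f="measure (joint_ch p W)"]) auto
    have hE: "h x \<in> ?E" using x F_def by auto
    have "pmf p (s,z) * pmf (W s z) s \<le> 2 powr (n*(a-b)) * (cond_out p W z s * marg_Z p z)"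
      apply (rule pointwise_conv[OF _ M n cond_out_nonneg pmf_nonneg cond_out_ge[OF M]])
      using sp hE xx h_def by (auto simp: pmf_positive)
    thus "pmf J (h x) \<le> 2 powr (n*(a-b)) * pmf \<mu> x"
      using pmu unfolding xx h_def J_def by (simp add: pmf_joint_ch)
  qed
  also have "\<dots> = 2 powr (n*(a-b)) * measure \<mu> F"
    by (simp add: sum_distrib_left measure_measure_pmf_finite finF)
  also have "\<dots> \<le> 2 powr (n*(a-b)) * 1"
    by (rule mult_left_mono) auto
  finally show ?thesis by (simp add: J_def)
qed



lemma marg_bound:
  fixes p :: "('s \<times> 'z) pmf" and Bad :: "'s \<times> 'z \<Rightarrow> bool"
  assumes fin: "finite (set_pmf p)"
  shows "measure p {x. Bad x \<and> measure p {y. Bad y \<and> snd y = snd x} / marg_Z p (snd x) < e} \<le> max e 0"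
proof -
  define \<phi> where "\<phi> z = measure p {y. Bad y \<and> snd y = z} / marg_Z p z" for z
  define Z' where "Z' = {z \<in> snd ` set_pmf p. \<phi> z < e}"
  have finZ: "finite Z'" using fin unfolding Z'_def by auto
  have "measure p {x. Bad x \<and> \<phi> (snd x) < e} = measure p ({x. Bad x \<and> \<phi> (snd x) < e} \<inter> set_pmf p)"
    by (simp add: measure_Int_set_pmf)
  also have "\<dots> \<le> measure p (\<Union>z\<in>Z'. {y. Bad y \<and> snd y = z})"
    by (rule measure_pmf.finite_measure_mono) (auto simp: Z'_def)
  also have "\<dots> \<le> (\<Sum>z\<in>Z'. measure p {y. Bad y \<and> snd y = z})"
    by (rule measure_pmf.finite_measure_subadditive_finite[OF finZ]) auto
  also have "\<dots> \<le> (\<Sum>z\<in>Z'. max e 0 * pmf (map_pmf snd p) z)"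
  proof (rule sum_mono)
    fix z assume z: "z \<in> Z'"
    then obtain x where x: "x \<in> set_pmf p" "z = snd x" and ph: "\<phi> z < e" unfolding Z'_def by auto
    have M: "marg_Z p z > 0" using marg_pos[OF x(1)] x by simp
    have "measure p {y. Bad y \<and> snd y = z} < e * marg_Z p z"
      using ph M unfolding \<phi>_def by (simp add: field_simps)
    also have "\<dots> \<le> max e 0 * marg_Z p z" using M by (intro mult_right_mono) auto
    finally show "measure p {y. Bad y \<and> snd y = z} \<le> max e 0 * pmf (map_pmf snd p) z"
      by (simp add: marg_pmf)
  qed
  also have "\<dots> = max e 0 * measure (map_pmf snd p) Z'"
    by (simp only: sum_distrib_left[symmetric] measure_measure_pmf_finite[OF finZ])
  also have "\<dots> \<le> max e 0 * 1" by (rule mult_left_mono) auto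
  finally show ?thesis unfolding \<phi>_def by simp
qed

lemma ach_bound:
  fixes p :: "('s \<times> 'z) pmf" and f :: "'s \<times> 'z \<Rightarrow> 'c" and Good :: "'s \<times> 'z \<Rightarrow> bool"
  assumes fin: "finite (set_pmf p)" and n: "n > 0" and r: "r > 0"
    and good: "\<And>x. x \<in> set_pmf p \<Longrightarrow> Good x \<Longrightarrow> log 2 (1 / (pmf p x / marg_Z p (snd x))) / n < r"
    and bad: "\<And>x. \<not> Good x \<Longrightarrow> f x = cz"
  shows "measure (joint_ch p (\<lambda>s z. return_pmf (f (s,z)))) {t.
     log 2 (pmf (return_pmf (f (fst t, fst (snd t)))) (snd (snd t))
       / cond_out p (\<lambda>s z. return_pmf (f (s,z))) (fst (snd t)) (snd (snd t))) / n > r}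
     \<le> 2 powr (-(n*r))"
  (is "measure _ ?E \<le> ?eps")
proof -
  define W where "W = (\<lambda>s z. return_pmf (f (s,z)))"
  define J where "J = joint_ch p W"
  define A where "A = {x. \<not> Good x \<and> measure p {y. \<not> Good y \<and> snd y = snd x} / marg_Z p (snd x) < ?eps}"
  have marg: "measure J ((\<lambda>t. (fst t, fst (snd t))) -` X) = measure p X" for X
    using arg_cong[OF marg_joint_ch[of p W], of "\<lambda>q. measure q X"] unfolding J_def by simp
  have sub: "?E \<inter> set_pmf J \<subseteq> (\<lambda>t. (fst t, fst (snd t))) -` A"
  proof
    fix t assume t: "t \<in> ?E \<inter> set_pmf J"
    obtain s z c where tt: "t = (s,z,c)" by (cases t) auto
    have sp: "(s,z) \<in> set_pmf p" and c: "c = f (s,z)" using t tt by (auto simp: J_def W_def set_joint_ch)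
    have M: "marg_Z p z > 0" using marg_pos[OF sp] by simp
    define q where "q = cond_out p W z c"
    have qM: "q * marg_Z p z \<ge> pmf p (s,z)"
      using cond_out_ge[OF M, where W=W and s=s and c=c] c unfolding q_def W_def by simp
    have pi: "pmf p (s,z) > 0" using sp by (simp add: pmf_positive)
    have q: "q > 0" using qM pi M by (metis less_le_trans mult_le_0_iff not_le order_less_imp_le)
    have dens: "r < log 2 (1 / q) / n" using t tt c unfolding q_def W_def by simp
    hence "r * n < log 2 (1/q)" using n by (simp add: field_simps)
    hence "2 powr (r*n) < 1/q" using q by (simp add: less_log_iff)
    hence qe: "q < ?eps" using q by (simp add: field_simps powr_minus mult.commute)
    have ng: "\<not> Good (s,z)"
    proof
      assume g: "Good (s,z)"
      have "log 2 (1/q) \<le> log 2 (1 / (pmf p (s,z) / marg_Z p z))"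
        using q pi M qM by (simp add: field_simps)
      hence "log 2 (1/q) / n \<le> log 2 (1 / (pmf p (s,z) / marg_Z p z)) / n"
        using n by (simp add: divide_right_mono)
      thus False using good[OF sp g] dens by simp
    qed
    have "measure p {y. \<not> Good y \<and> snd y = z}
        = measure J ((\<lambda>t. (fst t, fst (snd t))) -` {y. \<not> Good y \<and> snd y = z} \<inter> set_pmf J)"
      by (simp only: measure_Int_set_pmf marg)
    also have "\<dots> \<le> measure J {t. fst (snd t) = z \<and> snd (snd t) = c}"
      by (rule measure_pmf.finite_measure_mono)
        (use c bad ng in \<open>auto simp: J_def W_def set_joint_ch\<close>)
    also have "\<dots> = q * marg_Z p z" unfolding q_def J_def by (rule cond_out_mult[OF M, symmetric])
    finally have "measure p {y. \<not> Good y \<and> snd y = z} / marg_Z p z \<le> q"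
      using M by (simp add: field_simps)
    thus "t \<in> (\<lambda>t. (fst t, fst (snd t))) -` A" using qe ng tt unfolding A_def by auto
  qed
  have "measure J ?E = measure J (?E \<inter> set_pmf J)" by (simp add: measure_Int_set_pmf)
  also have "\<dots> \<le> measure J ((\<lambda>t. (fst t, fst (snd t))) -` A)"
    by (rule measure_pmf.finite_measure_mono[OF sub]) simp
  also have "\<dots> = measure p A" by (rule marg)
  also have "\<dots> \<le> max ?eps 0" unfolding A_def by (rule marg_bound[OF fin])
  finally show ?thesis unfolding J_def W_def by simp
qed



lemma tendsto_zero_mono:
  fixes a b :: "nat \<Rightarrow> real"
  assumes "\<And>m. 0 \<le> a m" "eventually (\<lambda>m. a m \<le> b m) sequentially" "b \<longlonglongrightarrow> 0"
  shows "a \<longlonglongrightarrow> 0"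
  by (rule tendsto_sandwich[of "\<lambda>_. 0" a sequentially b 0]) (use assms in auto)

lemma plimsup_le: "(\<lambda>m. measure ((\<mu>::nat \<Rightarrow> 'a pmf) m) {x. B m x > r}) \<longlonglongrightarrow> 0 \<Longrightarrow> plimsup \<mu> B \<le> ereal r"
  unfolding plimsup_def by (rule Inf_lower) auto

lemma plimsup_lt:
  fixes \<mu> :: "nat \<Rightarrow> 'a pmf"
  assumes "plimsup \<mu> B < ereal a"
  shows "(\<lambda>m. measure (\<mu> m) {x. B m x > a}) \<longlonglongrightarrow> 0"
proof -
  obtain r where r: "r < a" "(\<lambda>m. measure (\<mu> m) {x. B m x > r}) \<longlonglongrightarrow> 0"
    using assms unfolding plimsup_def Inf_less_iff by auto
  show ?thesis
    by (rule tendsto_zero_mono[OF _ _ r(2)])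
       (auto intro!: always_eventually measure_pmf.finite_measure_mono simp: less_trans[OF r(1)])
qed

lemma pliminf_ge: "(\<lambda>m. measure ((\<mu>::nat \<Rightarrow> 'a pmf) m) {x. B m x < r}) \<longlonglongrightarrow> 0 \<Longrightarrow> ereal r \<le> pliminf \<mu> B"
  unfolding pliminf_def by (rule Sup_upper) auto

lemma pliminf_gt:
  fixes \<mu> :: "nat \<Rightarrow> 'a pmf"
  assumes "ereal b < pliminf \<mu> B"
  shows "(\<lambda>m. measure (\<mu> m) {x. B m x < b}) \<longlonglongrightarrow> 0"
proof -
  obtain r where r: "b < r" "(\<lambda>m. measure (\<mu> m) {x. B m x < r}) \<longlonglongrightarrow> 0"
    using assms unfolding pliminf_def less_Sup_iff by auto
  show ?thesis
    by (rule tendsto_zero_mono[OF _ _ r(2)])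
       (auto intro!: always_eventually measure_pmf.finite_measure_mono simp: less_trans[OF _ r(1)])
qed

lemma pliminf_not:
  fixes \<mu> :: "nat \<Rightarrow> 'a pmf"
  assumes "pliminf \<mu> B < ereal r"
  shows "\<not> (\<lambda>m. measure (\<mu> m) {x. B m x < r}) \<longlonglongrightarrow> 0"
  using pliminf_ge[of \<mu> B r] assms by auto

lemma liminf_lt1:
  fixes X e \<beta> :: "nat \<Rightarrow> real"
  assumes X: "\<And>m. X m \<le> 1 - \<beta> m + e m" and b0: "\<And>m. \<beta> m \<ge> 0"
    and nb: "\<not> \<beta> \<longlonglongrightarrow> 0" and e: "e \<longlonglongrightarrow> 0"
  shows "liminf (\<lambda>m. ereal (X m)) < 1"
proof -
  obtain c where c: "c > 0" "\<And>N. \<exists>m\<ge>N. \<beta> m \<ge> c"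
    using nb unfolding LIMSEQ_iff using b0 by (auto simp: not_less)
  have ev: "eventually (\<lambda>m. e m < c/2) sequentially"
    using e c(1) by (auto dest: order_tendstoD(2)[where a="c/2"])
  show ?thesis
  proof (rule ccontr)
    assume "\<not> ?thesis"
    hence "1 \<le> liminf (\<lambda>m. ereal (X m))" by simp
    hence "\<forall>y<ereal 1. eventually (\<lambda>m. y < ereal (X m)) sequentially"
      unfolding le_Liminf_iff by (simp add: one_ereal_def)
    moreover have "ereal (1 - c/2) < ereal 1" using c(1) by simp
    ultimately have "eventually (\<lambda>m. ereal (1 - c/2) < ereal (X m)) sequentially"
      by blast
    with ev have "eventually (\<lambda>m. e m < c/2 \<and> 1 - c/2 < X m) sequentially"
      by eventually_elim auto
    then obtain N where N: "\<And>m. m \<ge> N \<Longrightarrow> e m < c/2 \<and> 1 - c/2 < X m"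
      unfolding eventually_sequentially by auto
    obtain m where "m \<ge> N" "\<beta> m \<ge> c" using c(2) by auto
    with N[of m] X[of m] show False by linarith
  qed
qed

lemma liminf_zero_lt1:
  fixes X :: "nat \<Rightarrow> real"
  assumes "X \<longlonglongrightarrow> 0"
  shows "liminf (\<lambda>m. ereal (X m)) < 1"
proof -
  have "liminf (\<lambda>m. ereal (X m)) = ereal 0"
    by (rule lim_imp_Liminf) (use assms in auto)
  thus ?thesis by simp
qed

lemma liminf_one:
  fixes X :: "nat \<Rightarrow> real"
  assumes "X \<longlonglongrightarrow> 1"
  shows "liminf (\<lambda>m. ereal (X m)) = 1"
proof -
  have "liminf (\<lambda>m. ereal (X m)) = ereal 1"
    by (rule lim_imp_Liminf) (use assms in auto)
  thus ?thesis by simp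
qed

lemma ch_law_det:
  "ch_law P (\<lambda>m s z. return_pmf (f m (s,z))) m = map_pmf (\<lambda>x. (fst x, f m x)) (P m)"
  unfolding ch_law_def joint_ch_def map_bind_pmf
  by (simp add: split_beta map_pmf_comp bind_return_pmf' map_pmf_def[symmetric])

lemma pow_zero: "r > 0 \<Longrightarrow> (\<lambda>m::nat. 2 powr (- (real m * r))) \<longlonglongrightarrow> 0"
  by real_asymp



lemma diag:
  fixes a :: "nat \<Rightarrow> nat \<Rightarrow> real"
  assumes lim: "\<And>k. a k \<longlonglongrightarrow> 0"
  shows "\<exists>\<kappa>::nat\<Rightarrow>nat. (\<forall>K. eventually (\<lambda>m. K \<le> \<kappa> m) sequentially)
           \<and> eventually (\<lambda>m. a (\<kappa> m) m < 1 / (real (\<kappa> m) + 1)) sequentially"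
proof -
  have "\<forall>k. \<exists>N. \<forall>m\<ge>N. a k m < 1 / (real k + 1)"
  proof
    fix k
    have "eventually (\<lambda>m. a k m < 1 / (real k + 1)) sequentially"
      by (rule order_tendstoD(2)[OF lim]) simp
    thus "\<exists>N. \<forall>m\<ge>N. a k m < 1 / (real k + 1)" unfolding eventually_sequentially .
  qed
  then obtain N where N: "\<And>k m. m \<ge> N k \<Longrightarrow> a k m < 1 / (real k + 1)" by metis
  define M where "M k = k + (\<Sum>j\<le>k. N j)" for k
  have NM: "N k \<le> M k" for k unfolding M_def
    using member_le_sum[of k "{..k}" N] by auto
  have kM: "k \<le> M k" for k unfolding M_def by simp
  have monoM: "M j \<le> M k" if "j \<le> k" for j k
    unfolding M_def using that sum_mono2[of "{..k}" "{..j}" N] by auto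
  define \<kappa> where "\<kappa> m = Max ({0} \<union> {k. k \<le> m \<and> M k \<le> m})" for m
  have fin: "finite ({0} \<union> {k. k \<le> m \<and> M k \<le> m})" for m by auto
  have P1: "K \<le> \<kappa> m" if "M K \<le> m" for K m
    unfolding \<kappa>_def by (rule Max_ge[OF fin]) (use that kM[of K] in auto)
  have P2: "a (\<kappa> m) m < 1 / (real (\<kappa> m) + 1)" if "M 1 \<le> m" for m
  proof -
    have "\<kappa> m \<in> {0} \<union> {k. k \<le> m \<and> M k \<le> m}" unfolding \<kappa>_def by (rule Max_in[OF fin]) auto
    moreover have "\<kappa> m \<ge> 1" using P1[OF that] .
    ultimately have "M (\<kappa> m) \<le> m" by auto
    thus ?thesis using NM[of "\<kappa> m"] by (intro N) simp
  qed
  show ?thesis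
    by (rule exI[of _ \<kappa>]) (auto simp: eventually_sequentially intro: P1 P2)
qed



lemma dist_inf_le:
  fixes \<mu> :: "nat \<Rightarrow> ('s \<times> 'c) pmf"
  assumes "\<And>\<delta>. \<delta> > DE \<Longrightarrow> liminf (\<lambda>m. ereal (measure (\<mu> m) {x. d m (fst x) (snd x) \<ge> \<delta>})) < 1"
  shows "dist_inf \<mu> d \<le> ereal DE"
  unfolding dist_inf_def
proof (rule dense_ge)
  fix y assume y: "ereal DE < y"
  show "Inf {ereal \<delta> |\<delta>. liminf (\<lambda>m. ereal (measure (\<mu> m) {x. \<delta> \<le> d m (fst x) (snd x)})) < 1} \<le> y"
  proof (cases y)
    case (real \<delta>)
    then show ?thesis using y assms[of \<delta>] by (intro Inf_lower) auto
  qed (use y in auto)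
qed

lemma H_nonneg: "cond_ent_inf P \<ge> 0"
proof -
  have z: "measure (P m) {x. log 2 (1 / (pmf (P m) x / marg_Z (P m) (snd x))) / real m < 0} = 0" for m
  proof -
    have "{x. log 2 (1 / (pmf (P m) x / marg_Z (P m) (snd x))) / real m < 0} \<inter> set_pmf (P m) = {}"
    proof (safe)
      fix x assume x: "x \<in> set_pmf (P m)" and lt: "log 2 (1 / (pmf (P m) x / marg_Z (P m) (snd x))) / real m < 0"
      have p: "pmf (P m) x > 0" using x by (simp add: pmf_positive)
      have M: "pmf (P m) x \<le> marg_Z (P m) (snd x)" by (rule marg_ge_pmf)
      have "1 \<le> 1 / (pmf (P m) x / marg_Z (P m) (snd x))" using p M by (simp add: field_simps)
      hence "0 \<le> log 2 (1 / (pmf (P m) x / marg_Z (P m) (snd x)))" by simp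
      hence "0 \<le> log 2 (1 / (pmf (P m) x / marg_Z (P m) (snd x))) / real m" by simp
      with lt show "x \<in> {}" by simp
    qed
    thus ?thesis by (metis measure_Int_set_pmf measure_empty)
  qed
  have "ereal 0 \<le> cond_ent_inf P" unfolding cond_ent_inf_def
    by (rule pliminf_ge) (simp only: z tendsto_const)
  thus ?thesis by (simp add: zero_ereal_def)
qed



lemma part1:
  fixes SS :: "nat \<Rightarrow> 's set" and ZS :: "nat \<Rightarrow> 'z set" and CS :: "nat \<Rightarrow> 'c set"
    and P :: "nat \<Rightarrow> ('s \<times> 'z) pmf" and d :: "nat \<Rightarrow> 's \<Rightarrow> 'c \<Rightarrow> real"
  assumes fin_S: "\<And>m. finite (SS m)" and fin_Z: "\<And>m. finite (ZS m)"
    and supp: "\<And>m. set_pmf (P m) \<subseteq> SS m \<times> ZS m"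
    and DE: "DE_min' SS CS P d \<le> ereal DE"
  shows "lossy_equiv SS CS P d DE \<le> cond_ent_inf P"
proof -
  have finP: "finite (set_pmf (P m))" for m
    by (rule finite_subset[OF supp]) (use fin_S fin_Z in auto)
  have SSne: "\<exists>s. s \<in> SS m" for m
    using set_pmf_not_empty[of "P m"] supp[of m] by fastforce
  have detmeas: "measure (det_law P g m) {x. t < d m (fst x) (snd x)} = measure (P m) {x. t < d m (fst x) (g m (fst x))}"
    "measure (det_law P g m) {x. t \<le> d m (fst x) (snd x)} = measure (P m) {x. t \<le> d m (fst x) (g m (fst x))}"
    for g m t by (simp_all add: det_law_def vimage_def)
  have ex: "\<exists>g\<in>det_maps SS CS. (\<lambda>m. measure (P m) {x. d m (fst x) (g m (fst x)) > DE + 1/(real k+1)}) \<longlonglongrightarrow> 0"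
    for k :: nat
  proof -
    have "DE_min' SS CS P d < ereal (DE + 1/(real k+1))"
      using DE by (rule le_less_trans) (simp add: add_pos_pos)
    then obtain g where g: "g \<in> det_maps SS CS" "dist_sup (det_law P g) d < ereal (DE + 1/(real k+1))"
      unfolding DE_min'_def INF_less_iff by blast
    have "(\<lambda>m. measure (det_law P g m) {x. d m (fst x) (snd x) > DE + 1/(real k+1)}) \<longlonglongrightarrow> 0"
      using plimsup_lt[OF g(2)[unfolded dist_sup_def]] .
    thus ?thesis using g(1) unfolding detmeas by blast
  qed
  hence "\<forall>k. \<exists>g. g \<in> det_maps SS CS \<and> (\<lambda>m. measure (P m) {x. d m (fst x) (g m (fst x)) > DE + 1/(real k+1)}) \<longlonglongrightarrow> 0"
    by blast
  from choice[OF this] obtain g where g1: "\<And>k. g k \<in> det_maps SS CS"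
    and g2: "\<And>k. (\<lambda>m. measure (P m) {x. d m (fst x) (g k m (fst x)) > DE + 1/(real k+1)}) \<longlonglongrightarrow> 0"
    by blast
  obtain \<kappa> where \<kappa>1: "\<And>K. eventually (\<lambda>m. K \<le> \<kappa> m) sequentially"
    and \<kappa>2: "eventually (\<lambda>m. measure (P m) {x. d m (fst x) (g (\<kappa> m) m (fst x)) > DE + 1/(real (\<kappa> m)+1)}
                 < 1 / (real (\<kappa> m) + 1)) sequentially"
    using diag[of "\<lambda>k m. measure (P m) {x. d m (fst x) (g k m (fst x)) > DE + 1/(real k+1)}", OF g2] by blast
  define G where "G m = g (\<kappa> m) m" for m
  have Gdet: "G \<in> det_maps SS CS" using g1 unfolding det_maps_def G_def by auto
  have Gtail: "(\<lambda>m. measure (P m) {x. d m (fst x) (G m (fst x)) \<ge> \<delta>}) \<longlonglongrightarrow> 0" if \<delta>: "\<delta> > DE" for \<delta>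
  proof (rule LIMSEQ_I)
    fix \<epsilon> :: real assume \<epsilon>: "\<epsilon> > 0"
    obtain K where K: "inverse (real (Suc K)) < min \<epsilon> (\<delta> - DE)"
      using reals_Archimedean[of "min \<epsilon> (\<delta> - DE)"] \<epsilon> \<delta> by auto
    have K': "1 / (real K + 1) < \<epsilon>" "1 / (real K + 1) < \<delta> - DE"
      using K by (auto simp: field_simps)
    from eventually_conj[OF \<kappa>1[of K] \<kappa>2] obtain no where
      no: "\<And>m. m \<ge> no \<Longrightarrow> K \<le> \<kappa> m \<and> measure (P m) {x. d m (fst x) (g (\<kappa> m) m (fst x)) > DE + 1/(real (\<kappa> m)+1)}
                 < 1 / (real (\<kappa> m) + 1)"
      unfolding eventually_sequentially by blast
    show "\<exists>no. \<forall>m\<ge>no. norm (measure (P m) {x. d m (fst x) (G m (fst x)) \<ge> \<delta>} - 0) < \<epsilon>"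
    proof (intro exI allI impI)
      fix m assume m: "m \<ge> no"
      have le: "1 / (real (\<kappa> m) + 1) \<le> 1 / (real K + 1)"
        using no[OF m] by (intro divide_left_mono) auto
      have "measure (P m) {x. d m (fst x) (G m (fst x)) \<ge> \<delta>}
          \<le> measure (P m) {x. d m (fst x) (g (\<kappa> m) m (fst x)) > DE + 1/(real (\<kappa> m)+1)}"
        by (rule measure_pmf.finite_measure_mono) (use le K' in \<open>auto simp: G_def\<close>)
      also have "\<dots> < \<epsilon>" using no[OF m] le K' by linarith
      finally show "norm (measure (P m) {x. d m (fst x) (G m (fst x)) \<ge> \<delta>} - 0) < \<epsilon>" by simp
    qed
  qed
  have distG: "dist_inf (det_law P G) d \<le> ereal DE"
    by (rule dist_inf_le) (use Gtail in \<open>auto simp: detmeas intro!: liminf_zero_lt1\<close>)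
  have notlt: "\<not> ereal DE < DE_min SS CS P d"
  proof -
    have "DE_min SS CS P d \<le> dist_inf (det_law P G) d"
      unfolding DE_min_def by (rule INF_lower[OF Gdet])
    thus ?thesis using distG by auto
  qed
  have key: "lossy_equiv SS CS P d DE \<le> ereal r" if r: "cond_ent_inf P < ereal r" for r
  proof -
    have r0: "r > 0" using le_less_trans[OF H_nonneg[of P] r] by simp
    define Bm where "Bm m x = log 2 (1 / (pmf (P m) x / marg_Z (P m) (snd x))) / real m" for m x
    have nb: "\<not> (\<lambda>m. measure (P m) {x. Bm m x < r}) \<longlonglongrightarrow> 0"
      using pliminf_not[of P _ r] r unfolding cond_ent_inf_def Bm_def by blast
    define Good where "Good m x \<longleftrightarrow> fst x \<in> SS m \<and> Bm m x < r" for m x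
    have CSne: "\<exists>c. c \<in> CS m" for m using SSne[of m] Gdet unfolding det_maps_def by blast
    define c0 where "c0 m = (SOME c. c \<in> CS m)" for m
    have c0: "c0 m \<in> CS m" for m unfolding c0_def using CSne[of m] by (rule someI_ex)
    define f where "f m x = (if Good m x then G m (fst x) else c0 m)" for m x
    define W where "W = (\<lambda>m s z. return_pmf (f m (s,z)))"
    have Wch: "W \<in> channels CS"
      using Gdet c0 unfolding channels_def W_def f_def Good_def det_maps_def by auto
    have info: "info_sup P W \<le> ereal r"
      unfolding info_sup_def
    proof (rule plimsup_le, rule tendsto_zero_mono[OF _ _ pow_zero[OF r0]])
      show "eventually (\<lambda>m. measure (joint_ch (P m) (W m)) {x. r < log 2 (pmf (W m (fst x) (fst (snd x))) (snd (snd x)) /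
                 cond_out (P m) (W m) (fst (snd x)) (snd (snd x))) / real m} \<le> 2 powr (- (real m * r))) sequentially"
        unfolding eventually_sequentially
      proof (intro exI allI impI)
        fix m :: nat assume "m \<ge> 1"
        hence n: "real m > 0" by simp
        show "measure (joint_ch (P m) (W m)) {x. r < log 2 (pmf (W m (fst x) (fst (snd x))) (snd (snd x)) /
                 cond_out (P m) (W m) (fst (snd x)) (snd (snd x))) / real m} \<le> 2 powr (- (real m * r))"
          unfolding W_def
          by (rule ach_bound[OF finP n r0, where Good="Good m" and cz="c0 m"])
             (auto simp: Good_def Bm_def f_def)
      qed
    qed simp
    have chm: "measure (ch_law P W m) {x. t \<le> d m (fst x) (snd x)} = measure (P m) {x. t \<le> d m (fst x) (f m x)}" for m t
      unfolding W_def ch_law_det by (simp add: vimage_def)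
    have distW: "dist_inf (ch_law P W) d \<le> ereal DE"
    proof (rule dist_inf_le)
      fix \<delta> assume \<delta>: "\<delta> > DE"
      show "liminf (\<lambda>m. ereal (measure (ch_law P W m) {x. d m (fst x) (snd x) \<ge> \<delta>})) < 1"
        unfolding chm
      proof (rule liminf_lt1[OF _ _ nb Gtail[OF \<delta>]])
        fix m
        show "measure (P m) {x. Bm m x < r} \<ge> 0" by simp
        have "measure (P m) {x. d m (fst x) (f m x) \<ge> \<delta>}
            \<le> measure (P m) ({x. \<not> Good m x} \<union> {x. d m (fst x) (G m (fst x)) \<ge> \<delta>})"
          by (rule measure_pmf.finite_measure_mono) (auto simp: f_def)
        also have "\<dots> \<le> measure (P m) {x. \<not> Good m x} + measure (P m) {x. d m (fst x) (G m (fst x)) \<ge> \<delta>}"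
          by (rule measure_Un_le) auto
        finally have A1: "measure (P m) {x. d m (fst x) (f m x) \<ge> \<delta>}
            \<le> measure (P m) {x. \<not> Good m x} + measure (P m) {x. d m (fst x) (G m (fst x)) \<ge> \<delta>}" .
        have A2: "measure (P m) {x. \<not> Good m x} = 1 - measure (P m) {x. Good m x}"
          using measure_pmf.prob_compl[of "{x. Good m x}" "P m"] by (simp add: Compl_eq_Diff_UNIV[symmetric] Collect_neg_eq)
        have A3: "measure (P m) {x. Good m x} \<ge> measure (P m) {x. Bm m x < r}"
        proof -
          have "measure (P m) {x. Bm m x < r} = measure (P m) ({x. Bm m x < r} \<inter> set_pmf (P m))"
            by (simp add: measure_Int_set_pmf)
          also have "\<dots> \<le> measure (P m) {x. Good m x}"
            by (rule measure_pmf.finite_measure_mono) (use supp[of m] in \<open>auto simp: Good_def\<close>)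
          finally show ?thesis .
        qed
        from A1 A2 A3 show "measure (P m) {x. d m (fst x) (f m x) \<ge> \<delta>}
           \<le> 1 - measure (P m) {x. Bm m x < r} + measure (P m) {x. d m (fst x) (G m (fst x)) \<ge> \<delta>}"
          by linarith
      qed
    qed
    have "lossy_equiv SS CS P d DE = (INF W \<in> {W \<in> channels CS. dist_inf (ch_law P W) d \<le> ereal DE}. info_sup P W)"
      unfolding lossy_equiv_def using notlt by simp
    also have "\<dots> \<le> info_sup P W" by (rule INF_lower) (use Wch distW in auto)
    also have "\<dots> \<le> ereal r" by (rule info)
    finally show ?thesis .
  qed
  show ?thesis
  proof (rule dense_ge)
    fix y assume y: "cond_ent_inf P < y"
    show "lossy_equiv SS CS P d DE \<le> y"
    proof (cases y)
      case (real r) thus ?thesis using key y by simp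
    qed (use y in auto)
  qed
qed



lemma part2:
  fixes SS :: "nat \<Rightarrow> 's set" and ZS :: "nat \<Rightarrow> 'z set"
    and P :: "nat \<Rightarrow> ('s \<times> 'z) pmf"
  assumes fin_S: "\<And>m. finite (SS m)" and fin_Z: "\<And>m. finite (ZS m)"
    and supp: "\<And>m. set_pmf (P m) \<subseteq> SS m \<times> ZS m"
  shows "cond_ent_inf P \<le> lossy_equiv SS SS P (\<lambda>m s t. if s \<noteq> t then 1 else 0) 0"
proof -
  have finP: "finite (set_pmf (P m))" for m
    by (rule finite_subset[OF supp]) (use fin_S fin_Z in auto)
  define dH :: "nat \<Rightarrow> 's \<Rightarrow> 's \<Rightarrow> real" where "dH = (\<lambda>m s t. if s \<noteq> t then 1 else 0)"
  have main: "cond_ent_inf P \<le> info_sup P W"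
    if W: "W \<in> channels SS" "dist_inf (ch_law P W) dH \<le> ereal 0" for W
  proof (rule ccontr)
    assume "\<not> ?thesis"
    hence lt: "info_sup P W < cond_ent_inf P" by simp
    obtain a where a: "info_sup P W < ereal a" "ereal a < cond_ent_inf P" using ereal_dense2[OF lt] by blast
    obtain b where b: "ereal a < ereal b" "ereal b < cond_ent_inf P" using ereal_dense2[OF a(2)] by blast
    have ab: "a < b" using b(1) by simp
    define J where "J m = joint_ch (P m) (W m)" for m
    define dens where "dens m t = log 2 (pmf (W m (fst t) (fst (snd t))) (snd (snd t))
        / cond_out (P m) (W m) (fst (snd t)) (snd (snd t))) / real m" for m t
    define Bm where "Bm m x = log 2 (1 / (pmf (P m) x / marg_Z (P m) (snd x))) / real m" for m x
    have T1: "(\<lambda>m. measure (J m) {t. dens m t > a}) \<longlonglongrightarrow> 0"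
      using plimsup_lt[OF a(1)[unfolded info_sup_def]] unfolding J_def dens_def by simp
    have T2: "(\<lambda>m. measure (P m) {x. Bm m x < b}) \<longlonglongrightarrow> 0"
      using pliminf_gt[OF b(2)[unfolded cond_ent_inf_def]] unfolding Bm_def by simp
    have margJ: "measure (J m) ((\<lambda>t. (fst t, fst (snd t))) -` X) = measure (P m) X" for m X
      using arg_cong[OF marg_joint_ch[of "P m" "W m"], of "\<lambda>q. measure q X"] unfolding J_def by simp
    have T2': "(\<lambda>m. measure (J m) {t. Bm m (fst t, fst (snd t)) < b}) \<longlonglongrightarrow> 0"
      using T2 margJ[of _ "{x. Bm _ x < b}"] by (simp add: vimage_def)
    have T3: "(\<lambda>m::nat. 2 powr (real m * (a - b))) \<longlonglongrightarrow> 0"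
      using pow_zero[of "b - a"] ab by (simp add: algebra_simps)
    have E3: "measure (J m) {t. fst t = snd (snd t) \<and> dens m t \<le> a \<and> b \<le> Bm m (fst t, fst (snd t))}
        \<le> 2 powr (real m * (a - b))" if m: "m \<ge> 1" for m
      using conv_bound[OF finP, where n="real m" and W="W m" and a=a and b=b] m unfolding J_def dens_def Bm_def by simp
    have Eq: "(\<lambda>m. measure (J m) {t. fst t = snd (snd t)}) \<longlonglongrightarrow> 0"
    proof (rule tendsto_zero_mono)
      show "(\<lambda>m. measure (J m) {t. dens m t > a} + measure (J m) {t. Bm m (fst t, fst (snd t)) < b}
              + 2 powr (real m * (a - b))) \<longlonglongrightarrow> 0"
        using tendsto_add[OF tendsto_add[OF T1 T2'] T3] by simp
      show "eventually (\<lambda>m. measure (J m) {t. fst t = snd (snd t)} \<le>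
          measure (J m) {t. dens m t > a} + measure (J m) {t. Bm m (fst t, fst (snd t)) < b}
              + 2 powr (real m * (a - b))) sequentially"
        unfolding eventually_sequentially
      proof (intro exI allI impI)
        fix m :: nat assume m: "m \<ge> 1"
        have "measure (J m) {t. fst t = snd (snd t)} \<le> measure (J m) (({t. dens m t > a} \<union> {t. Bm m (fst t, fst (snd t)) < b})
           \<union> {t. fst t = snd (snd t) \<and> dens m t \<le> a \<and> b \<le> Bm m (fst t, fst (snd t))})"
          by (rule measure_pmf.finite_measure_mono) auto
        also have "\<dots> \<le> measure (J m) ({t. dens m t > a} \<union> {t. Bm m (fst t, fst (snd t)) < b})
           + measure (J m) {t. fst t = snd (snd t) \<and> dens m t \<le> a \<and> b \<le> Bm m (fst t, fst (snd t))}"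
          by (rule measure_Un_le) auto
        also have "\<dots> \<le> measure (J m) {t. dens m t > a} + measure (J m) {t. Bm m (fst t, fst (snd t)) < b}
           + 2 powr (real m * (a - b))"
          using measure_Un_le[of "{t. dens m t > a}" "J m" "{t. Bm m (fst t, fst (snd t)) < b}"] E3[OF m] by simp
        finally show "measure (J m) {t. fst t = snd (snd t)} \<le>
          measure (J m) {t. dens m t > a} + measure (J m) {t. Bm m (fst t, fst (snd t)) < b}
              + 2 powr (real m * (a - b))" .
      qed
    qed simp
    have Neq: "(\<lambda>m. measure (J m) {t. fst t \<noteq> snd (snd t)}) \<longlonglongrightarrow> 1"
    proof -
      have "measure (J m) {t. fst t \<noteq> snd (snd t)} = 1 - measure (J m) {t. fst t = snd (snd t)}" for m
        using measure_pmf.prob_compl[of "{t. fst t = snd (snd t)}" "J m"]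
        by (simp add: Compl_eq_Diff_UNIV[symmetric] Collect_neg_eq)
      thus ?thesis using tendsto_diff[OF tendsto_const[of 1] Eq] by simp
    qed
    have "dist_inf (ch_law P W) dH < ereal (1/2)" using W(2) by (rule le_less_trans) simp
    then obtain \<delta> where \<delta>: "\<delta> < 1/2"
      "liminf (\<lambda>m. ereal (measure (ch_law P W m) {x. \<delta> \<le> dH m (fst x) (snd x)})) < 1"
      unfolding dist_inf_def Inf_less_iff by auto
    show False
    proof (cases "\<delta> \<le> 0")
      case True
      hence "{x. \<delta> \<le> dH m (fst x) (snd x)} = UNIV" for m unfolding dH_def by auto
      hence "liminf (\<lambda>m. ereal (measure (ch_law P W m) {x. \<delta> \<le> dH m (fst x) (snd x)})) = 1"
        by (simp add: liminf_one)
      with \<delta>(2) show False by simp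
    next
      case False
      hence "{x. \<delta> \<le> dH m (fst x) (snd x)} = {x. fst x \<noteq> snd x}" for m
        unfolding dH_def using \<delta>(1) by auto
      hence "measure (ch_law P W m) {x. \<delta> \<le> dH m (fst x) (snd x)} = measure (J m) {t. fst t \<noteq> snd (snd t)}" for m
        unfolding ch_law_def J_def by (simp add: vimage_def)
      hence "liminf (\<lambda>m. ereal (measure (ch_law P W m) {x. \<delta> \<le> dH m (fst x) (snd x)})) = 1"
        using liminf_one[OF Neq] by simp
      with \<delta>(2) show False by simp
    qed
  qed
  show ?thesis
    unfolding lossy_equiv_def dH_def[symmetric]
    by (auto intro!: INF_greatest main simp: zero_ereal_def)
qed


theorem proposition1:
  fixes SS :: "nat \<Rightarrow> 's set" and ZS :: "nat \<Rightarrow> 'z set" and CS :: "nat \<Rightarrow> 'c set"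
    and P :: "nat \<Rightarrow> ('s \<times> 'z) pmf" and d :: "nat \<Rightarrow> 's \<Rightarrow> 'c \<Rightarrow> real"
  assumes fin_S: "\<And>m. finite (SS m)" and fin_Z: "\<And>m. finite (ZS m)"
    and fin_C: "\<And>m. finite (CS m)"
    and supp: "\<And>m. set_pmf (P m) \<subseteq> SS m \<times> ZS m"
    and d_nonneg: "\<And>m s c. d m s c \<ge> 0"
  shows "(\<forall>DE::real. ereal DE \<ge> DE_min' SS CS P d \<longrightarrow>
            lossy_equiv SS CS P d DE \<le> cond_ent_inf P)
       \<and> lossy_equiv SS SS P (\<lambda>m s t. if s \<noteq> t then 1 else 0) 0 = cond_ent_inf P"
proof -
  have p1: "\<forall>DE::real. ereal DE \<ge> DE_min' SS CS P d \<longrightarrow> lossy_equiv SS CS P d DE \<le> cond_ent_inf P"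
    using part1[where SS=SS and ZS=ZS and P=P and CS=CS and d=d, OF fin_S fin_Z supp] by blast
  define dH :: "nat \<Rightarrow> 's \<Rightarrow> 's \<Rightarrow> real" where "dH = (\<lambda>m s t. if s \<noteq> t then 1 else 0)"
  have idm: "(\<lambda>m s. s) \<in> det_maps SS SS" by (simp add: det_maps_def)
  have "DE_min' SS SS P dH \<le> dist_sup (det_law P (\<lambda>m s. s)) dH"
    unfolding DE_min'_def by (rule INF_lower[OF idm])
  also have "\<dots> \<le> ereal 0"
    unfolding dist_sup_def by (rule plimsup_le) (simp add: det_law_def dH_def vimage_def)
  finally have dm: "DE_min' SS SS P dH \<le> ereal 0" .
  have le: "lossy_equiv SS SS P dH 0 \<le> cond_ent_inf P"
    by (rule part1[where SS=SS and ZS=ZS and P=P, OF fin_S fin_Z supp dm])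
  have ge: "cond_ent_inf P \<le> lossy_equiv SS SS P dH 0"
    unfolding dH_def by (rule part2[where SS=SS and ZS=ZS and P=P, OF fin_S fin_Z supp])
  show ?thesis using p1 le ge unfolding dH_def by (auto intro: antisym)
qed

end
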